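(* Under the standing assumptions, the set $\mathcal{D}(V)$ is convex and the value function $V$ is concave on $\mathcal{D}(V)$.
   Context: Fix $T>0$, $r>0$, $\rho>0$. $L^2_{-T}:=L^2([-T,0];\mathbb{R})$, $W^{1,2}_{-T}:=W^{1,2}([-T,0];\mathbb{R})$, $H:=\mathbb{R}\times L^2_{-T}$ with elements $\eta=(\eta_0,\eta_1)$, $H_+:=(0,+\infty)\times L^2_{-T}$. Standing assumptions: $a\in W^{1,2}_{-T}$, $a\ge0$, $a(-T)=0$; $f_0:[0,\infty)\times\mathbb{R}\to\mathbb{R}$ jointly concave, nondecreasing in its second variable, Lipschitz with constant $C_{f_0}$, $f_0(0,y)>0$ for all $y>0$, extended to $\mathbb{R}^2$ by $f_0(x,y):=f_0(0,y)$ for $x<0$; $U_1\in C([0,\infty))\cap C^2((0,\infty))$ with $U_1'>0$, $U_1'(0^+)=+\infty$, $U_1''<0$, $U_1$ bounded; $U_2\in C((0,\infty))$ increasing, concave, bounded above, with $\int_0^\infty e^{-\rho t}U_2(e^{-C_{f_0}t})dt>-\infty$. For $\eta\in H_+$ and $c\in L^1_{loc}([0,\infty);[0,\infty))$, $x(\cdot;\eta,c)$ is the unique function $x:[-T,\infty)\to\mathbb{R}$, continuous on $[0,\infty)$, with $x=\eta_1$ a.e. on $[-T,0)$ and $x(t)=\eta_0+\int_0^t[r x(s)+f_0(x(s),\int_{-T}^0a(\xi)x(s+\xi)d\xi)-c(s)]ds$ for $t\ge 0$. Admissible controls: $\mathcal{C}(\eta):=\{c\in L^1_{loc}([0,\infty);[0,\infty))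 : x(t;\eta,c)>0\ \forall t\ge0\}$. Objective $J(\eta;c):=\int_0^\infty e^{-\rho t}[U_1(c(t))+U_2(x(t;\eta,c))]dt$, value function $V(\eta):=\sup_{c\in\mathcal{C}(\eta)}J(\eta;c)$ (with $\sup\emptyset=-\infty$), and $\mathcal{D}(V):=\{\eta\in H_+: V(\eta)>-\infty\}$. *)

theory Defs
  imports "HOL-Analysis.Analysis"
begin

text \<open>Elements of H = R x L2([-T,0]) are represented as pairs (eta0, eta1) with
  eta1 a real function which is square integrable on [-T,0].\<close>

definition L2_on :: "real \<Rightarrow> (real \<Rightarrow> real) \<Rightarrow> bool" where
  "L2_on T g \<longleftrightarrow> set_borel_measurable lborel {-T..0} g
      \<and> set_integrable lborel {-T..0} (\<lambda>s. (g s)\<^sup>2)"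

definition W12_on :: "real \<Rightarrow> (real \<Rightarrow> real) \<Rightarrow> bool" where
  "W12_on T a \<longleftrightarrow> (\<exists>a'. L2_on T a' \<and>
      (\<forall>\<xi>\<in>{-T..0}. a \<xi> = a (-T) + (LINT s:{-T..\<xi>}|lborel. a' s)))"

definition H_plus :: "real \<Rightarrow> (real \<times> (real \<Rightarrow> real)) set" where
  "H_plus T = {\<eta>. fst \<eta> > 0 \<and> L2_on T (snd \<eta>)}"

definition comb :: "real \<Rightarrow> real \<times> (real \<Rightarrow> real) \<Rightarrow> real \<times> (real \<Rightarrow> real) \<Rightarrow> real \<times> (real \<Rightarrow> real)" where
  "comb l \<eta> \<eta>' = (l * fst \<eta> + (1 - l) * fst \<eta>', \<lambda>s. l * snd \<eta> s + (1 - l) * snd \<eta>' s)"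

definition control :: "(real \<Rightarrow> real) \<Rightarrow> bool" where
  "control c \<longleftrightarrow> (\<forall>t\<ge>0. c t \<ge> 0) \<and> (\<forall>t\<ge>0. set_integrable lborel {0..t} c)"

text \<open>x solves the state equation with initial datum eta and control c
  (the representative is fixed by x = eta1 on t < 0).\<close>
definition is_state :: "real \<Rightarrow> real \<Rightarrow> (real \<Rightarrow> real) \<Rightarrow> (real \<Rightarrow> real \<Rightarrow> real)
    \<Rightarrow> real \<times> (real \<Rightarrow> real) \<Rightarrow> (real \<Rightarrow> real) \<Rightarrow> (real \<Rightarrow> real) \<Rightarrow> bool" where
  "is_state T r a f0 \<eta> c x \<longleftrightarrow>
     (\<forall>t<0. x t = snd \<eta> t) \<and> continuous_on {0..} x \<and>
     (\<forall>t\<ge>0.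
        set_integrable lborel {0..t}
          (\<lambda>s. r * x s + f0 (x s) (LINT \<xi>:{-T..0}|lborel. a \<xi> * x (s + \<xi>)) - c s) \<and>
        x t = fst \<eta> + (LINT s:{0..t}|lborel.
           r * x s + f0 (x s) (LINT \<xi>:{-T..0}|lborel. a \<xi> * x (s + \<xi>)) - c s))"

definition state :: "real \<Rightarrow> real \<Rightarrow> (real \<Rightarrow> real) \<Rightarrow> (real \<Rightarrow> real \<Rightarrow> real)
    \<Rightarrow> real \<times> (real \<Rightarrow> real) \<Rightarrow> (real \<Rightarrow> real) \<Rightarrow> (real \<Rightarrow> real)" where
  "state T r a f0 \<eta> c = (THE x. is_state T r a f0 \<eta> c x)"

definition admissible :: "real \<Rightarrow> real \<Rightarrow> (real \<Rightarrow> real) \<Rightarrow> (real \<Rightarrow> real \<Rightarrow> real)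
    \<Rightarrow> real \<times> (real \<Rightarrow> real) \<Rightarrow> (real \<Rightarrow> real) set" where
  "admissible T r a f0 \<eta> = {c. control c \<and> is_state T r a f0 \<eta> c (state T r a f0 \<eta> c)
        \<and> (\<forall>t\<ge>0. state T r a f0 \<eta> c t > 0)}"

definition objective :: "real \<Rightarrow> (real \<Rightarrow> real) \<Rightarrow> (real \<Rightarrow> real) \<Rightarrow> (real \<Rightarrow> real) \<Rightarrow> (real \<Rightarrow> real) \<Rightarrow> ereal" where
  "objective \<rho> U1 U2 c x =
     enn2ereal (\<integral>\<^sup>+ t. ennreal (indicator {0..} t * (exp (-\<rho> * t) * (U1 (c t) + U2 (x t)))) \<partial>lborel)
   - enn2ereal (\<integral>\<^sup>+ t. ennreal (- (indicator {0..} t * (exp (-\<rho> * t) * (U1 (c t) + U2 (x t))))) \<partial>lborel)"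

definition J :: "real \<Rightarrow> real \<Rightarrow> real \<Rightarrow> (real \<Rightarrow> real) \<Rightarrow> (real \<Rightarrow> real \<Rightarrow> real)
    \<Rightarrow> (real \<Rightarrow> real) \<Rightarrow> (real \<Rightarrow> real) \<Rightarrow> real \<times> (real \<Rightarrow> real) \<Rightarrow> (real \<Rightarrow> real) \<Rightarrow> ereal" where
  "J T r \<rho> a f0 U1 U2 \<eta> c = objective \<rho> U1 U2 c (state T r a f0 \<eta> c)"

definition V :: "real \<Rightarrow> real \<Rightarrow> real \<Rightarrow> (real \<Rightarrow> real) \<Rightarrow> (real \<Rightarrow> real \<Rightarrow> real)
    \<Rightarrow> (real \<Rightarrow> real) \<Rightarrow> (real \<Rightarrow> real) \<Rightarrow> real \<times> (real \<Rightarrow> real) \<Rightarrow> ereal" where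
  "V T r \<rho> a f0 U1 U2 \<eta> = Sup (J T r \<rho> a f0 U1 U2 \<eta> ` admissible T r a f0 \<eta>)"

definition domV :: "real \<Rightarrow> real \<Rightarrow> real \<Rightarrow> (real \<Rightarrow> real) \<Rightarrow> (real \<Rightarrow> real \<Rightarrow> real)
    \<Rightarrow> (real \<Rightarrow> real) \<Rightarrow> (real \<Rightarrow> real) \<Rightarrow> (real \<times> (real \<Rightarrow> real)) set" where
  "domV T r \<rho> a f0 U1 U2 = {\<eta> \<in> H_plus T. V T r \<rho> a f0 U1 U2 \<eta> > -\<infinity>}"

end

theory Submission
  imports Defs
begin
definition Dop :: "real \<Rightarrow> (real\<Rightarrow>real) \<Rightarrow> (real\<Rightarrow>real) \<Rightarrow> real \<Rightarrow> real" where
  "Dop T a x s = (LINT \<xi>:{-T..0}|lborel. a \<xi> * x (s + \<xi>))"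

lemma L2_integrable:
  assumes "L2_on T g" shows "set_integrable lborel {-T..0} g"
proof -
  have m: "set_borel_measurable lborel {-T..0} g" and s: "set_integrable lborel {-T..0} (\<lambda>s. (g s)^2)"
    using assms by (auto simp: L2_on_def)
  have c: "set_integrable lborel {-T..0} (\<lambda>s. 1::real)"
    by (rule borel_integrable_atLeastAtMost') (auto intro: continuous_intros)
  have "set_integrable lborel {-T..0} (\<lambda>s. 1 + (g s)^2)"
    using c s by (rule set_integral_add)
  then show ?thesis
  proof (rule set_integrable_bound[OF _ m])
    show "AE x in lborel. x \<in> {-T..0} \<longrightarrow> norm (g x) \<le> norm (1 + (g x)\<^sup>2)"
    proof (intro AE_I2 impI)
      fix x
      have "\<bar>g x\<bar> \<le> 1 + (g x)^2"
      proof (cases "\<bar>g x\<bar> \<le> 1")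
        case True then show ?thesis by (smt (verit) zero_le_power2)
      next
        case False
        then have "\<bar>g x\<bar> * 1 \<le> \<bar>g x\<bar> * \<bar>g x\<bar>" by (intro mult_left_mono) auto
        then show ?thesis by (simp add: power2_eq_square abs_mult_self_eq)
      qed
      then show "norm (g x) \<le> norm (1 + (g x)\<^sup>2)" by simp
    qed
  qed
qed

lemma a_props:
  assumes "W12_on T a"
  shows "set_borel_measurable lborel {-T..0} a"
    and "\<exists>B\<ge>0. \<forall>\<xi>\<in>{-T..0}. \<bar>a \<xi>\<bar> \<le> B"
proof -
  obtain a' where L: "L2_on T a'" and aeq: "\<forall>\<xi>\<in>{-T..0}. a \<xi> = a (-T) + (LINT s:{-T..\<xi>}|lborel. a' s)"
    using assms by (auto simp: W12_on_def)
  have ai: "set_integrable lborel {-T..0} a'" using L by (rule L2_integrable)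
  have am[measurable]: "(\<lambda>s. indicator {-T..0} s * a' s) \<in> borel_measurable borel"
    using L by (auto simp: L2_on_def set_borel_measurable_def)
  define A where "A = (\<lambda>\<xi>. a (-T) + (\<integral>s. indicator {-T..\<xi>} s * (indicator {-T..0} s * a' s) \<partial>lborel))"
  have Am: "A \<in> borel_measurable borel"
  proof -
    have "(\<lambda>(\<xi>::real, s::real). indicator {-T..\<xi>} s * (indicator {-T..0} s * a' s)) \<in> borel_measurable (lborel \<Otimes>\<^sub>M lborel)"
    proof -
      have c: "closed {p::real\<times>real. -T \<le> snd p \<and> snd p \<le> fst p}"
        by (intro closed_Collect_conj closed_Collect_le continuous_intros)
      have m1: "indicator {p::real\<times>real. -T \<le> snd p \<and> snd p \<le> fst p} \<in> borel_measurable (borel::(real\<times>real) measure)"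
        by (rule borel_measurable_indicator) (use c in simp)
      have m2: "(\<lambda>p::real\<times>real. indicator {-T..0} (snd p) * a' (snd p)) \<in> borel_measurable borel"
      proof -
        have "(\<lambda>p::real\<times>real. indicator {-T..0} (snd p) * a' (snd p)) \<in> borel_measurable (borel \<Otimes>\<^sub>M borel)"
          using measurable_compose[OF measurable_snd am] by (simp add: o_def)
        then show ?thesis by (simp add: borel_prod)
      qed
      have "(\<lambda>p::real\<times>real. indicator {p::real\<times>real. -T \<le> snd p \<and> snd p \<le> fst p} p * (indicator {-T..0} (snd p) * a' (snd p))) \<in> borel_measurable borel"
        using m1 m2 by (rule borel_measurable_times)
      then show ?thesis by (simp add: lborel_prod case_prod_beta indicator_def cong: if_cong)
    qed
    then have "(\<lambda>\<xi>. \<integral>s. indicator {-T..\<xi>} s * (indicator {-T..0} s * a' s) \<partial>lborel) \<in> borel_measurable lborel"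
      by (rule lborel.borel_measurable_lebesgue_integral[where f="\<lambda>\<xi> s. indicator {-T..\<xi>} s * (indicator {-T..0} s * a' s)", simplified])
    then show ?thesis unfolding A_def by simp
  qed
  have eqA: "a \<xi> = A \<xi>" if "\<xi> \<in> {-T..0}" for \<xi>
  proof -
    have "(LINT s:{-T..\<xi>}|lborel. a' s) = (\<integral>s. indicator {-T..\<xi>} s * (indicator {-T..0} s * a' s) \<partial>lborel)"
      unfolding set_lebesgue_integral_def
      by (rule Bochner_Integration.integral_cong[OF refl]) (use that in \<open>auto split: split_indicator\<close>)
    moreover have "a \<xi> = a (-T) + (LINT s:{-T..\<xi>}|lborel. a' s)" using aeq that by blast
    ultimately show ?thesis unfolding A_def by simp
  qed
  have "(\<lambda>\<xi>. indicator {-T..0} \<xi> *\<^sub>R a \<xi>) = (\<lambda>\<xi>. indicator {-T..0} \<xi> *\<^sub>R A \<xi>)"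
    using eqA by (auto split: split_indicator simp: fun_eq_iff)
  moreover have "(\<lambda>\<xi>. indicator {-T..0} \<xi> *\<^sub>R A \<xi>) \<in> borel_measurable lborel"
    using Am by simp
  ultimately show "set_borel_measurable lborel {-T..0} a"
    unfolding set_borel_measurable_def by simp
  define B where "B = \<bar>a (-T)\<bar> + (LINT s:{-T..0}|lborel. \<bar>a' s\<bar>)"
  have aai: "set_integrable lborel {-T..0} (\<lambda>s. \<bar>a' s\<bar>)" using ai by (rule set_integrable_abs)
  have bd: "\<bar>a \<xi>\<bar> \<le> B" if "\<xi> \<in> {-T..0}" for \<xi>
  proof -
    have i2: "set_integrable lborel {-T..\<xi>} a'"
      by (rule set_integrable_subset[OF ai]) (use that in auto)
    have "\<bar>LINT s:{-T..\<xi>}|lborel. a' s\<bar> \<le> (LINT s:{-T..\<xi>}|lborel. norm (a' s))"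
      using set_integral_norm_bound[OF i2] by simp
    also have "\<dots> \<le> (LINT s:{-T..0}|lborel. \<bar>a' s\<bar>)"
      unfolding set_lebesgue_integral_def
      apply (rule integral_mono)
      using set_integrable_abs[OF i2] aai that
      by (auto simp: set_integrable_def split: split_indicator)
    moreover have "a \<xi> = a (-T) + (LINT s:{-T..\<xi>}|lborel. a' s)" using aeq that by blast
    ultimately show ?thesis unfolding B_def by linarith
  qed
  moreover have "B \<ge> 0"
    unfolding B_def
    unfolding set_lebesgue_integral_def
    by (intro add_nonneg_nonneg abs_ge_zero integral_nonneg) (auto split: split_indicator)
  ultimately show "\<exists>B\<ge>0. \<forall>\<xi>\<in>{-T..0}. \<bar>a \<xi>\<bar> \<le> B" by blast
qed

lemma xint:
  fixes x g :: "real \<Rightarrow> real"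
  assumes xg: "\<forall>t<0. x t = g t" and xc: "continuous_on {0..} x" and L: "L2_on T g"
    and t: "t \<ge> 0" and T: "T > 0"
  shows "set_integrable lborel {-T..t} x"
proof -
  have gi: "set_integrable lborel {-T..0} g" using L by (rule L2_integrable)
  have "set_integrable lborel {-T..<0} g" by (rule set_integrable_subset[OF gi]) auto
  moreover have "set_integrable lborel {-T..<0} x = set_integrable lborel {-T..<0} g"
    by (rule set_integrable_cong) (auto simp: xg)
  ultimately have 1: "set_integrable lborel {-T..<0} x" by simp
  have 2: "set_integrable lborel {0..t} x"
    by (rule borel_integrable_atLeastAtMost', rule continuous_on_subset[OF xc]) auto
  have "set_integrable lborel ({-T..<0} \<union> {0..t}) x"
    by (rule set_integrable_Un[OF 1 2]) auto
  moreover have "{-T..<0} \<union> {0..t} = {-T..t}" using T t by auto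
  ultimately show ?thesis by simp
qed

lemma Dint:
  fixes x g a :: "real \<Rightarrow> real"
  assumes xg: "\<forall>t<0. x t = g t" and xc: "continuous_on {0..} x" and L: "L2_on T g"
    and T: "T > 0" and am: "set_borel_measurable lborel {-T..0} a"
    and ab: "\<forall>\<xi>\<in>{-T..0}. \<bar>a \<xi>\<bar> \<le> B" and B: "B \<ge> 0"
    and s: "s \<ge> 0" "s \<le> t"
  shows "set_integrable lborel {-T..0} (\<lambda>\<xi>. a \<xi> * x (s+\<xi>))"
    and "\<bar>Dop T a x s\<bar> \<le> B * (LINT u:{-T..t}|lborel. \<bar>x u\<bar>)"
proof -
  have xi: "set_integrable lborel {-T..t} x" using xint[OF xg xc L _ T] s by simp
  have xia: "set_integrable lborel {-T..t} (\<lambda>u. \<bar>x u\<bar>)" using xi by (rule set_integrable_abs)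
  have sh0: "integrable lborel (\<lambda>\<xi>. indicator {-T..t} (s + 1 * \<xi>) *\<^sub>R x (s + 1 * \<xi>))"
    using xi unfolding set_integrable_def by (intro lborel_integrable_real_affine) auto
  have sha: "integrable lborel (\<lambda>\<xi>. indicator {-T..t} (s + 1 * \<xi>) *\<^sub>R \<bar>x (s + 1 * \<xi>)\<bar>)"
    using xia unfolding set_integrable_def by (intro lborel_integrable_real_affine) auto
  have "integrable lborel (\<lambda>\<xi>. indicator {-T..0} \<xi> *\<^sub>R (indicator {-T..t} (s + 1 * \<xi>) *\<^sub>R x (s + 1 * \<xi>)))"
    by (rule integrable_mult_indicator[OF _ sh0]) auto
  moreover have "(\<lambda>\<xi>. indicator {-T..0} \<xi> *\<^sub>R (indicator {-T..t} (s + 1 * \<xi>) *\<^sub>R x (s + 1 * \<xi>)))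
      = (\<lambda>\<xi>. indicator {-T..0} \<xi> *\<^sub>R x (s + \<xi>))"
    using s T by (auto simp: fun_eq_iff split: split_indicator)
  ultimately have sh: "set_integrable lborel {-T..0} (\<lambda>\<xi>. x (s+\<xi>))"
    unfolding set_integrable_def by simp
  have shm: "(\<lambda>\<xi>. indicator {-T..0} \<xi> *\<^sub>R x (s + \<xi>)) \<in> borel_measurable lborel"
    using sh unfolding set_integrable_def by (rule borel_measurable_integrable)
  have amm: "(\<lambda>\<xi>. indicator {-T..0} \<xi> *\<^sub>R a \<xi>) \<in> borel_measurable lborel"
    using am unfolding set_borel_measurable_def .
  have pm: "set_borel_measurable lborel {-T..0} (\<lambda>\<xi>. a \<xi> * x (s+\<xi>))"
  proof -
    have "(\<lambda>\<xi>. (indicator {-T..0} \<xi> *\<^sub>R a \<xi>) * (indicator {-T..0} \<xi> *\<^sub>R x (s + \<xi>))) \<in> borel_measurable lborel"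
      using amm shm by (rule borel_measurable_times)
    moreover have "(\<lambda>\<xi>. (indicator {-T..0} \<xi> *\<^sub>R a \<xi>) * (indicator {-T..0} \<xi> *\<^sub>R x (s + \<xi>)))
        = (\<lambda>\<xi>. indicator {-T..0} \<xi> *\<^sub>R (a \<xi> * x (s+\<xi>)))"
      by (auto simp: fun_eq_iff split: split_indicator)
    ultimately show ?thesis unfolding set_borel_measurable_def by simp
  qed
  have Bsh: "set_integrable lborel {-T..0} (\<lambda>\<xi>. B * x (s+\<xi>))"
    using sh by (rule set_integrable_mult_right)
  show pi: "set_integrable lborel {-T..0} (\<lambda>\<xi>. a \<xi> * x (s+\<xi>))"
  proof (rule set_integrable_bound[OF Bsh pm], intro AE_I2 impI)
    fix \<xi> :: real assume "\<xi> \<in> {-T..0}"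
    then have "\<bar>a \<xi>\<bar> * \<bar>x (s+\<xi>)\<bar> \<le> B * \<bar>x (s+\<xi>)\<bar>" using ab by (intro mult_right_mono) auto
    then show "norm (a \<xi> * x (s+\<xi>)) \<le> norm (B * x (s+\<xi>))" using B by (simp add: abs_mult)
  qed
  have shabs: "set_integrable lborel {-T..0} (\<lambda>\<xi>. \<bar>x (s+\<xi>)\<bar>)" using sh by (rule set_integrable_abs)
  have "\<bar>Dop T a x s\<bar> \<le> (LINT \<xi>:{-T..0}|lborel. norm (a \<xi> * x (s+\<xi>)))"
    unfolding Dop_def using set_integral_norm_bound[OF pi] by simp
  also have "\<dots> \<le> (LINT \<xi>:{-T..0}|lborel. B * \<bar>x (s+\<xi>)\<bar>)"
  proof (rule set_integral_mono)
    show "set_integrable lborel {-T..0} (\<lambda>\<xi>. norm (a \<xi> * x (s+\<xi>)))"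
      using set_integrable_abs[OF pi] by simp
    show "set_integrable lborel {-T..0} (\<lambda>\<xi>. B * \<bar>x (s+\<xi>)\<bar>)"
      using shabs by (rule set_integrable_mult_right)
    fix \<xi> :: real assume "\<xi> \<in> {-T..0}"
    then have "\<bar>a \<xi>\<bar> * \<bar>x (s+\<xi>)\<bar> \<le> B * \<bar>x (s+\<xi>)\<bar>" using ab by (intro mult_right_mono) auto
    then show "norm (a \<xi> * x (s+\<xi>)) \<le> B * \<bar>x (s+\<xi>)\<bar>" by (simp add: abs_mult)
  qed
  also have "\<dots> = B * (LINT \<xi>:{-T..0}|lborel. \<bar>x (s+\<xi>)\<bar>)" by simp
  also have "(LINT \<xi>:{-T..0}|lborel. \<bar>x (s+\<xi>)\<bar>) \<le> (LINT u:{-T..t}|lborel. \<bar>x u\<bar>)"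
  proof -
    have "(LINT \<xi>:{-T..0}|lborel. \<bar>x (s+\<xi>)\<bar>) \<le> (\<integral>\<xi>. indicator {-T..t} (s + 1 * \<xi>) *\<^sub>R \<bar>x (s + 1 * \<xi>)\<bar> \<partial>lborel)"
      unfolding set_lebesgue_integral_def
    proof (rule integral_mono[OF _ sha])
      show "integrable lborel (\<lambda>\<xi>. indicator {-T..0} \<xi> *\<^sub>R \<bar>x (s+\<xi>)\<bar>)"
        using shabs unfolding set_integrable_def .
      fix \<xi> :: real show "indicator {-T..0} \<xi> *\<^sub>R \<bar>x (s+\<xi>)\<bar> \<le> indicator {-T..t} (s + 1 * \<xi>) *\<^sub>R \<bar>x (s + 1 * \<xi>)\<bar>"
        using s T by (auto split: split_indicator)
    qed
    also have "\<dots> = (\<integral>u. indicator {-T..t} u *\<^sub>R \<bar>x u\<bar> \<partial>lborel)"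
      using lborel_integral_real_affine[of 1 "\<lambda>u. indicator {-T..t} u *\<^sub>R \<bar>x u\<bar>" s] by simp
    finally show ?thesis unfolding set_lebesgue_integral_def .
  qed
  then have "B * (LINT \<xi>:{-T..0}|lborel. \<bar>x (s+\<xi>)\<bar>) \<le> B * (LINT u:{-T..t}|lborel. \<bar>x u\<bar>)"
    using B by (rule mult_left_mono)
  finally show "\<bar>Dop T a x s\<bar> \<le> B * (LINT u:{-T..t}|lborel. \<bar>x u\<bar>)" .
qed

lemma Dmeas:
  fixes x g a :: "real \<Rightarrow> real"
  assumes xg: "\<forall>t<0. x t = g t" and xc: "continuous_on {0..} x" and L: "L2_on T g"
    and T: "T > 0" and am: "set_borel_measurable lborel {-T..0} a"
  shows "\<exists>DX. DX \<in> borel_measurable borel \<and> (\<forall>s\<ge>0. Dop T a x s = DX s)"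
proof -
  define X where "X = (\<lambda>u. indicator {-T..<0} u * (indicator {-T..0} u *\<^sub>R g u) + indicator {0..} u *\<^sub>R x u)"
  have gm: "(\<lambda>u. indicator {-T..0} u *\<^sub>R g u) \<in> borel_measurable borel"
    using L by (simp add: L2_on_def set_borel_measurable_def)
  have xm: "(\<lambda>u. indicator {0..} u *\<^sub>R x u) \<in> borel_measurable borel"
    by (rule borel_measurable_continuous_on_indicator[OF _ xc]) auto
  have Xm: "X \<in> borel_measurable borel"
    unfolding X_def using gm xm by (intro borel_measurable_add borel_measurable_times) auto
  define Aa where "Aa = (\<lambda>\<xi>. indicator {-T..0} \<xi> *\<^sub>R a \<xi>)"
  have Am: "Aa \<in> borel_measurable borel" using am by (simp add: Aa_def set_borel_measurable_def)
  define DX where "DX = (\<lambda>s. \<integral>\<xi>. Aa \<xi> * X (s + \<xi>) \<partial>lborel)"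
  have joint: "(\<lambda>(s, \<xi>). Aa \<xi> * X (s + \<xi>)) \<in> borel_measurable (lborel \<Otimes>\<^sub>M lborel)"
  proof -
    have m1: "(\<lambda>p::real\<times>real. Aa (snd p)) \<in> borel_measurable (borel \<Otimes>\<^sub>M borel)"
      by (rule measurable_compose[OF measurable_snd Am])
    have pl: "(\<lambda>p::real\<times>real. fst p + snd p) \<in> borel_measurable borel"
      by (intro borel_measurable_continuous_onI continuous_intros)
    have m2: "(\<lambda>p::real\<times>real. X (fst p + snd p)) \<in> borel_measurable borel"
      using measurable_compose[OF pl Xm] by (simp add: o_def)
    have "(\<lambda>p::real\<times>real. Aa (snd p) * X (fst p + snd p)) \<in> borel_measurable borel"
      using m1[unfolded borel_prod] m2 by (rule borel_measurable_times)
    then show ?thesis by (simp add: lborel_prod case_prod_beta)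
  qed
  have "DX \<in> borel_measurable lborel"
    unfolding DX_def using lborel.borel_measurable_lebesgue_integral[OF joint] by simp
  moreover have "Dop T a x s = DX s" if "s \<ge> 0" for s
    unfolding Dop_def DX_def set_lebesgue_integral_def
  proof (rule Bochner_Integration.integral_cong[OF refl])
    fix \<xi> :: real
    show "indicator {-T..0} \<xi> *\<^sub>R (a \<xi> * x (s + \<xi>)) = Aa \<xi> * X (s + \<xi>)"
      using that xg unfolding Aa_def X_def by (auto split: split_indicator)
  qed
  ultimately show ?thesis by auto
qed

lemma f0_global:
  fixes f0 :: "real \<Rightarrow> real \<Rightarrow> real"
  assumes lip: "Cf-lipschitz_on ({0..} \<times> UNIV) (\<lambda>p. f0 (fst p) (snd p))"
    and ext: "\<forall>x<0. \<forall>y. f0 x y = f0 0 y"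
  shows "\<bar>f0 u v - f0 u' v'\<bar> \<le> Cf * (\<bar>u - u'\<bar> + \<bar>v - v'\<bar>)"
proof -
  have mx: "f0 w z = f0 (max w 0) z" for w z using ext by (cases "w < 0") auto
  have C: "Cf \<ge> 0" using lip by (rule lipschitz_on_nonneg)
  have "dist ((\<lambda>p. f0 (fst p) (snd p)) (max u 0, v)) ((\<lambda>p. f0 (fst p) (snd p)) (max u' 0, v')) \<le> Cf * dist (max u 0, v) (max u' 0, v')"
    by (rule lipschitz_onD[OF lip]) auto
  then have "dist (f0 (max u 0) v) (f0 (max u' 0) v') \<le> Cf * dist (max u 0, v) (max u' 0, v')"
    by simp
  also have "dist (max u 0, v) (max u' 0, v') \<le> \<bar>u - u'\<bar> + \<bar>v - v'\<bar>"
  proof -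
    have "dist (max u 0, v) (max u' 0, v') = sqrt ((dist (max u 0) (max u' 0))\<^sup>2 + (dist v v')\<^sup>2)"
      by (rule dist_Pair_Pair)
    also have "\<dots> \<le> \<bar>dist (max u 0) (max u' 0)\<bar> + \<bar>dist v v'\<bar>" by (rule sqrt_sum_squares_le_sum_abs)
    also have "\<dots> \<le> \<bar>u - u'\<bar> + \<bar>v - v'\<bar>" by (simp add: dist_real_def)
    finally show ?thesis .
  qed
  then have "Cf * dist (max u 0, v) (max u' 0, v') \<le> Cf * (\<bar>u - u'\<bar> + \<bar>v - v'\<bar>)"
    using C by (rule mult_left_mono)
  finally show ?thesis by (simp add: dist_real_def mx[of u v] mx[of u' v'])
qed

lemma f0_cont:
  fixes f0 :: "real \<Rightarrow> real \<Rightarrow> real"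
  assumes g: "\<And>u v u' v'. \<bar>f0 u v - f0 u' v'\<bar> \<le> Cf * (\<bar>u - u'\<bar> + \<bar>v - v'\<bar>)" and C: "Cf \<ge> 0"
  shows "continuous_on UNIV (\<lambda>p. f0 (fst p) (snd p))"
proof (rule lipschitz_on_continuous_on[of "2*Cf"], rule lipschitz_onI)
  fix p q :: "real \<times> real"
  have "\<bar>fst p - fst q\<bar> \<le> dist p q" "\<bar>snd p - snd q\<bar> \<le> dist p q"
    by (metis dist_fst_le dist_real_def, metis dist_snd_le dist_real_def)
  then have "Cf * (\<bar>fst p - fst q\<bar> + \<bar>snd p - snd q\<bar>) \<le> Cf * (2 * dist p q)"
    using C by (intro mult_left_mono) auto
  then show "dist (f0 (fst p) (snd p)) (f0 (fst q) (snd q)) \<le> 2 * Cf * dist p q"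
    using g[of "fst p" "snd p" "fst q" "snd q"] by (simp add: dist_real_def)
qed (use C in auto)

lemma f0_meas:
  fixes f0 :: "real \<Rightarrow> real \<Rightarrow> real"
  assumes c: "continuous_on UNIV (\<lambda>p. f0 (fst p) (snd p))"
    and p: "P \<in> borel_measurable M" and q: "Q \<in> borel_measurable M"
  shows "(\<lambda>s. f0 (P s) (Q s)) \<in> borel_measurable M"
proof -
  have "(\<lambda>p. f0 (fst p) (snd p)) \<in> borel_measurable (borel \<Otimes>\<^sub>M borel)"
    using borel_measurable_continuous_onI[OF c] by (simp add: borel_prod)
  moreover have "(\<lambda>s. (P s, Q s)) \<in> M \<rightarrow>\<^sub>M borel \<Otimes>\<^sub>M borel"
    using p q by (rule measurable_Pair)
  ultimately have "(\<lambda>p. f0 (fst p) (snd p)) \<circ> (\<lambda>s. (P s, Q s)) \<in> borel_measurable M"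
    by (intro measurable_comp) auto
  then show ?thesis by (simp add: o_def)
qed

lemma is_state_D:
  "is_state T r a f0 \<eta> c x \<longleftrightarrow> (\<forall>t<0. x t = snd \<eta> t) \<and> continuous_on {0..} x \<and>
     (\<forall>t\<ge>0. set_integrable lborel {0..t} (\<lambda>s. r * x s + f0 (x s) (Dop T a x s) - c s) \<and>
        x t = fst \<eta> + (LINT s:{0..t}|lborel. r * x s + f0 (x s) (Dop T a x s) - c s))"
  by (simp add: is_state_def Dop_def)

lemma uniq:
  fixes x y a c :: "real \<Rightarrow> real" and f0 :: "real \<Rightarrow> real \<Rightarrow> real"
  assumes T: "T > 0" and r: "r \<ge> 0" and B: "B \<ge> 0"
    and am: "set_borel_measurable lborel {-T..0} a"
    and ab: "\<forall>\<xi>\<in>{-T..0}. \<bar>a \<xi>\<bar> \<le> B" and L: "L2_on T (snd \<eta>)"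
    and g: "\<And>u v u' v'. \<bar>f0 u v - f0 u' v'\<bar> \<le> Cf * (\<bar>u - u'\<bar> + \<bar>v - v'\<bar>)" and C: "Cf \<ge> 0"
    and sx: "is_state T r a f0 \<eta> c x" and sy: "is_state T r a f0 \<eta> c y"
  shows "x = y"
proof -
  note sx' = sx[unfolded is_state_D] and sy' = sy[unfolded is_state_D]
  have x0: "\<forall>t<0. x t = snd \<eta> t" and xc: "continuous_on {0..} x"
    and xI: "\<And>t. t \<ge> 0 \<Longrightarrow> set_integrable lborel {0..t} (\<lambda>s. r * x s + f0 (x s) (Dop T a x s) - c s)"
    and xE: "\<And>t. t \<ge> 0 \<Longrightarrow> x t = fst \<eta> + (LINT s:{0..t}|lborel. r * x s + f0 (x s) (Dop T a x s) - c s)"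
    using sx' by auto
  have y0: "\<forall>t<0. y t = snd \<eta> t" and yc: "continuous_on {0..} y"
    and yI: "\<And>t. t \<ge> 0 \<Longrightarrow> set_integrable lborel {0..t} (\<lambda>s. r * y s + f0 (y s) (Dop T a y s) - c s)"
    and yE: "\<And>t. t \<ge> 0 \<Longrightarrow> y t = fst \<eta> + (LINT s:{0..t}|lborel. r * y s + f0 (y s) (Dop T a y s) - c s)"
    using sy' by auto
  define K where "K = r + Cf + Cf * B * T"
  have K: "K \<ge> 0" unfolding K_def using r C B T by simp
  define h where "h = 1 / (2 * K + 2)"
  have h: "h > 0" unfolding h_def using K by simp
  have Kh: "K * h \<le> 1/2" unfolding h_def using K by (simp add: field_simps)
  define Fx where "Fx = (\<lambda>s. r * x s + f0 (x s) (Dop T a x s) - c s)"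
  define Fy where "Fy = (\<lambda>s. r * y s + f0 (y s) (Dop T a y s) - c s)"
  have step: "\<forall>t < t0 + h. x t = y t" if IH: "\<forall>t < t0. x t = y t" and t0: "t0 \<ge> 0" for t0
  proof -
    define t1 where "t1 = t0 + h"
    have dc: "continuous_on {t0..t1} (\<lambda>t. \<bar>x t - y t\<bar>)"
      by (intro continuous_intros continuous_on_subset[OF xc] continuous_on_subset[OF yc]) (use t0 in auto)
    obtain tm where tm: "tm \<in> {t0..t1}" and mx: "\<forall>t\<in>{t0..t1}. \<bar>x t - y t\<bar> \<le> \<bar>x tm - y tm\<bar>"
      using continuous_attains_sup[OF compact_Icc _ dc] h unfolding t1_def by auto
    define S where "S = \<bar>x tm - y tm\<bar>"
    have S0: "S \<ge> 0" unfolding S_def by simp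
    have dS: "\<bar>x u - y u\<bar> \<le> S" if "u \<le> t1" for u
    proof (cases "u < t0")
      case True then show ?thesis using IH S0 by simp
    next
      case False then show ?thesis using mx that unfolding S_def by auto
    qed
    have Deq: "Dop T a x s = Dop T a y s" if "s < t0" for s
      unfolding Dop_def
      by (rule set_lebesgue_integral_cong) (use that IH in auto)
    have Dbd: "\<bar>Dop T a x s - Dop T a y s\<bar> \<le> B * S * T" if "0 \<le> s" "s \<le> t1" for s
    proof -
      have ix: "set_integrable lborel {-T..0} (\<lambda>\<xi>. a \<xi> * x (s+\<xi>))"
        using Dint(1)[OF x0 xc L T am ab B, of s s] that by simp
      have iy: "set_integrable lborel {-T..0} (\<lambda>\<xi>. a \<xi> * y (s+\<xi>))"
        using Dint(1)[OF y0 yc L T am ab B, of s s] that by simp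
      have "Dop T a x s - Dop T a y s = (LINT \<xi>:{-T..0}|lborel. a \<xi> * x (s+\<xi>) - a \<xi> * y (s+\<xi>))"
        unfolding Dop_def using set_integral_diff(2)[OF ix iy] by simp
      also have "\<bar>\<dots>\<bar> \<le> (LINT \<xi>:{-T..0}|lborel. norm (a \<xi> * x (s+\<xi>) - a \<xi> * y (s+\<xi>)))"
        using set_integral_norm_bound[OF set_integral_diff(1)[OF ix iy]] by simp
      also have "\<dots> \<le> (LINT \<xi>:{-T..0}|lborel. B * S)"
      proof (rule set_integral_mono)
        show "set_integrable lborel {-T..0} (\<lambda>\<xi>. norm (a \<xi> * x (s+\<xi>) - a \<xi> * y (s+\<xi>)))"
          using set_integrable_abs[OF set_integral_diff(1)[OF ix iy]] by simp
        show "set_integrable lborel {-T..0} (\<lambda>\<xi>. B * S)"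
          by (rule borel_integrable_atLeastAtMost') (auto intro: continuous_intros)
        fix \<xi> :: real assume \<xi>: "\<xi> \<in> {-T..0}"
        have "\<bar>a \<xi>\<bar> * \<bar>x (s+\<xi>) - y (s+\<xi>)\<bar> \<le> B * S"
          by (rule mult_mono) (use ab \<xi> dS that B in auto)
        then show "norm (a \<xi> * x (s+\<xi>) - a \<xi> * y (s+\<xi>)) \<le> B * S"
          by (simp add: abs_mult right_diff_distrib[symmetric])
      qed
      also have "\<dots> = B * S * T" using T by (simp add: set_integral_const)
      finally show ?thesis .
    qed
    have Fbd: "\<bar>Fx s - Fy s\<bar> \<le> K * S" if "0 \<le> s" "s \<le> t1" for s
    proof -
      have "\<bar>Fx s - Fy s\<bar> \<le> r * \<bar>x s - y s\<bar> + \<bar>f0 (x s) (Dop T a x s) - f0 (y s) (Dop T a y s)\<bar>"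
      proof -
        have eq: "Fx s - Fy s = r * (x s - y s) + (f0 (x s) (Dop T a x s) - f0 (y s) (Dop T a y s))"
          unfolding Fx_def Fy_def by (simp add: algebra_simps)
        show ?thesis unfolding eq using abs_triangle_ineq[of "r * (x s - y s)"] r by (simp add: abs_mult)
      qed
      also have "\<dots> \<le> r * S + Cf * (S + B * S * T)"
      proof (rule add_mono)
        show "r * \<bar>x s - y s\<bar> \<le> r * S" using dS[of s] that r by (intro mult_left_mono) auto
        have "\<bar>f0 (x s) (Dop T a x s) - f0 (y s) (Dop T a y s)\<bar> \<le> Cf * (\<bar>x s - y s\<bar> + \<bar>Dop T a x s - Dop T a y s\<bar>)"
          by (rule g)
        also have "\<dots> \<le> Cf * (S + B * S * T)"
          using dS[of s] Dbd[OF that] that C by (intro mult_left_mono add_mono) auto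
        finally show "\<bar>f0 (x s) (Dop T a x s) - f0 (y s) (Dop T a y s)\<bar> \<le> Cf * (S + B * S * T)" .
      qed
      also have "\<dots> = K * S" unfolding K_def by (simp add: algebra_simps)
      finally show ?thesis .
    qed
    have Feq: "Fx s = Fy s" if "s < t0" for s
      unfolding Fx_def Fy_def using IH that Deq[OF that] by simp
    have bound: "\<bar>x t - y t\<bar> \<le> K * S * h" if "t0 \<le> t" "t \<le> t1" for t
    proof -
      have t: "t \<ge> 0" using that t0 by simp
      have ix: "set_integrable lborel {0..t} Fx" using xI[OF t] unfolding Fx_def .
      have iy: "set_integrable lborel {0..t} Fy" using yI[OF t] unfolding Fy_def .
      have "x t - y t = (LINT s:{0..t}|lborel. Fx s - Fy s)"
        using xE[OF t] yE[OF t] set_integral_diff(2)[OF ix iy] unfolding Fx_def Fy_def by simp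
      also have "\<bar>\<dots>\<bar> \<le> (LINT s:{0..t}|lborel. norm (Fx s - Fy s))"
        using set_integral_norm_bound[OF set_integral_diff(1)[OF ix iy]] by simp
      also have "\<dots> \<le> (\<integral>s. (K * S) * indicator {t0..t} s \<partial>lborel)"
        unfolding set_lebesgue_integral_def
      proof (rule integral_mono)
        show "integrable lborel (\<lambda>s. indicator {0..t} s *\<^sub>R norm (Fx s - Fy s))"
          using set_integrable_abs[OF set_integral_diff(1)[OF ix iy]] unfolding set_integrable_def by simp
        show "integrable lborel (\<lambda>s. (K * S) * indicator {t0..t} s)"
          by (rule borel_integrable_atLeastAtMost) auto
        fix s :: real
        show "indicator {0..t} s *\<^sub>R norm (Fx s - Fy s) \<le> (K * S) * indicator {t0..t} s"
        proof (cases "s < t0")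
          case True then show ?thesis using Feq[OF True] K S0 by (auto split: split_indicator)
        next
          case False then show ?thesis using Fbd[of s] that t0 by (auto split: split_indicator)
        qed
      qed
      also have "\<dots> = K * S * (t - t0)" using that by simp
      also have "\<dots> \<le> K * S * h" using that K S0 unfolding t1_def by (intro mult_left_mono) auto
      finally show ?thesis .
    qed
    have "S \<le> K * S * h" using bound[of tm] tm unfolding S_def by auto
    also have "\<dots> \<le> S / 2" using Kh S0 by (metis mult.commute mult.left_commute mult_left_mono times_divide_eq_right mult.right_neutral)
    finally have S00: "S = 0" using S0 by simp
    show ?thesis
    proof (intro allI impI)
      fix t assume "t < t0 + h"
      then show "x t = y t" using dS[of t] S00 unfolding t1_def by simp
    qed
  qed
  have all: "\<forall>t < real n * h. x t = y t" for n
  proof (induction n)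
    case 0 then show ?case using x0 y0 by simp
  next
    case (Suc n)
    have "\<forall>t < real n * h + h. x t = y t" by (rule step[OF Suc]) (use h in simp)
    then show ?case by (simp add: algebra_simps)
  qed
  show "x = y"
  proof
    fix t
    obtain n where "t < real n * h" using ex_less_of_nat_mult[OF h] by blast
    then show "x t = y t" using all by blast
  qed
qed

lemma control_meas:
  fixes c :: "real \<Rightarrow> real"
  assumes "\<forall>t\<ge>0. set_integrable lborel {0..t} c"
  shows "(\<lambda>t. indicator {0..} t * c t) \<in> borel_measurable borel"
proof (rule borel_measurable_LIMSEQ_real[where u="\<lambda>i t. indicator {0..real i} t * c t"])
  fix i :: nat
  have "integrable lborel (\<lambda>t. indicator {0..real i} t *\<^sub>R c t)"
    using assms unfolding set_integrable_def by auto
  then show "(\<lambda>t. indicator {0..real i} t * c t) \<in> borel_measurable borel"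
    using borel_measurable_integrable by fastforce
next
  fix t :: real
  obtain N :: nat where N: "t \<le> real N" using real_arch_simple by blast
  have "eventually (\<lambda>i. indicator {0..real i} t * c t = indicator {0..} t * c t) sequentially"
  proof (rule eventually_sequentiallyI[of N])
    fix i assume "N \<le> i"
    then have "t \<le> real i" using N by (meson of_nat_le_iff order_trans)
    then show "indicator {0..real i} t * c t = indicator {0..} t * c t"
      by (auto split: split_indicator)
  qed
  then show "(\<lambda>i. indicator {0..real i} t * c t) \<longlonglongrightarrow> indicator {0..} t * c t"
    by (rule tendsto_eventually)
qed

definition OBJ :: "(real \<Rightarrow> real) \<Rightarrow> ereal" where
  "OBJ f = enn2ereal (\<integral>\<^sup>+t. ennreal (f t) \<partial>lborel) - enn2ereal (\<integral>\<^sup>+t. ennreal (- f t) \<partial>lborel)"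

lemma objective_OBJ:
  "objective \<rho> U1 U2 c x = OBJ (\<lambda>t. indicator {0..} t * (exp (-\<rho> * t) * (U1 (c t) + U2 (x t))))"
  by (simp add: objective_def OBJ_def)

lemma enn_fin_aux: fixes P N :: ennreal assumes "P = ennreal p" "p \<ge> 0" shows "enn2ereal P - enn2ereal N \<noteq> \<infinity>"
proof (cases N rule: ennreal_cases)
  case (real r) then show ?thesis using assms by simp
next
  case top then show ?thesis using assms by simp
qed

lemma enn_fin_aux2: fixes P :: ennreal assumes "P \<noteq> \<infinity>" obtains p where "P = ennreal p" "p \<ge> 0"
  using assms by (cases P rule: ennreal_cases) auto

lemma OBJ_integrable:
  assumes "integrable lborel f" shows "OBJ f = ereal (integral\<^sup>L lborel f)"
proof -
  have p: "(\<integral>\<^sup>+t. ennreal (f t) \<partial>lborel) \<noteq> \<infinity>" and n: "(\<integral>\<^sup>+t. ennreal (- f t) \<partial>lborel) \<noteq> \<infinity>"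
    using integrableD[OF assms] by auto
  obtain p where p: "(\<integral>\<^sup>+t. ennreal (f t) \<partial>lborel) = ennreal p" "p \<ge> 0" using enn_fin_aux2[OF p] by blast
  obtain q where q: "(\<integral>\<^sup>+t. ennreal (- f t) \<partial>lborel) = ennreal q" "q \<ge> 0" using enn_fin_aux2[OF n] by blast
  show ?thesis
    unfolding OBJ_def real_lebesgue_integral_def[OF assms] p(1) q(1) using p(2) q(2) by simp
qed

lemma OBJ_pos_fin:
  assumes E: "integrable lborel E" and le: "\<And>t. f t \<le> E t"
  shows "(\<integral>\<^sup>+t. ennreal (f t) \<partial>lborel) \<noteq> \<infinity>"
proof -
  have 1: "(\<integral>\<^sup>+t. ennreal (f t) \<partial>lborel) \<le> (\<integral>\<^sup>+t. ennreal (E t) \<partial>lborel)"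
    by (intro nn_integral_mono ennreal_leI le)
  have 2: "(\<integral>\<^sup>+t. ennreal (E t) \<partial>lborel) \<noteq> \<infinity>" using integrableD[OF E] by auto
  show ?thesis using 1 2 by (simp add: top_unique[symmetric] less_top[symmetric])
qed

lemma OBJ_ne_inf:
  assumes "(\<integral>\<^sup>+t. ennreal (f t) \<partial>lborel) \<noteq> \<infinity>"
  shows "OBJ f \<noteq> \<infinity>"
proof -
  obtain p where p: "(\<integral>\<^sup>+t. ennreal (f t) \<partial>lborel) = ennreal p" "p \<ge> 0" using enn_fin_aux2[OF assms] by blast
  show ?thesis unfolding OBJ_def by (rule enn_fin_aux[OF p])
qed

lemma OBJ_minf:
  assumes "(\<integral>\<^sup>+t. ennreal (f t) \<partial>lborel) \<noteq> \<infinity>" "(\<integral>\<^sup>+t. ennreal (- f t) \<partial>lborel) = \<infinity>"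
  shows "OBJ f = -\<infinity>"
proof -
  obtain p where p: "(\<integral>\<^sup>+t. ennreal (f t) \<partial>lborel) = ennreal p" "p \<ge> 0" using enn_fin_aux2[OF assms(1)] by blast
  show ?thesis unfolding OBJ_def p(1) assms(2) using p(2) by simp
qed

lemma OBJ_concave:
  fixes f f' g E :: "real \<Rightarrow> real"
  assumes fm: "f \<in> borel_measurable lborel" and fm': "f' \<in> borel_measurable lborel"
    and gm: "g \<in> borel_measurable lborel"
    and E: "integrable lborel E" and fE: "\<And>t. f t \<le> E t" and fE': "\<And>t. f' t \<le> E t"
    and gE: "\<And>t. g t \<le> E t"
    and l: "0 < l" "l < 1" and fg: "\<And>t. l * f t + (1 - l) * f' t \<le> g t"
  shows "ereal l * OBJ f + ereal (1 - l) * OBJ f' \<le> OBJ g"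
proof -
  have pf: "(\<integral>\<^sup>+t. ennreal (f t) \<partial>lborel) \<noteq> \<infinity>" using OBJ_pos_fin[OF E fE] .
  have pf': "(\<integral>\<^sup>+t. ennreal (f' t) \<partial>lborel) \<noteq> \<infinity>" using OBJ_pos_fin[OF E fE'] .
  have pg: "(\<integral>\<^sup>+t. ennreal (g t) \<partial>lborel) \<noteq> \<infinity>" using OBJ_pos_fin[OF E gE] .
  have nf: "OBJ f \<noteq> \<infinity>" and nf': "OBJ f' \<noteq> \<infinity>" using OBJ_ne_inf pf pf' by auto
  show ?thesis
  proof (cases "(\<integral>\<^sup>+t. ennreal (- f t) \<partial>lborel) = \<infinity>")
    case True
    then have "OBJ f = -\<infinity>" using OBJ_minf pf by blast
    then have e: "ereal l * OBJ f = -\<infinity>" using l by simp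
    have z: "ereal (1 - l) * OBJ f' \<noteq> \<infinity>" using nf' l by (cases "OBJ f'") auto
    have "ereal l * OBJ f + ereal (1 - l) * OBJ f' = -\<infinity>" unfolding e using z by (cases "ereal (1 - l) * OBJ f'") auto
    then show ?thesis by (rule order_trans[OF eq_refl]) simp
  next
    case F1: False
    show ?thesis
    proof (cases "(\<integral>\<^sup>+t. ennreal (- f' t) \<partial>lborel) = \<infinity>")
      case True
      then have "OBJ f' = -\<infinity>" using OBJ_minf pf' by blast
      then have e: "ereal (1 - l) * OBJ f' = -\<infinity>" using l by simp
      have z: "ereal l * OBJ f \<noteq> \<infinity>" using nf l by (cases "OBJ f") auto
      have "ereal l * OBJ f + ereal (1 - l) * OBJ f' = -\<infinity>" unfolding e using z by (cases "ereal l * OBJ f") auto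
      then show ?thesis by (rule order_trans[OF eq_refl]) simp
    next
      case F2: False
      have fi: "integrable lborel f" using fm pf F1 unfolding real_integrable_def by auto
      have fi': "integrable lborel f'" using fm' pf' F2 unfolding real_integrable_def by auto
      have hi: "integrable lborel (\<lambda>t. l * f t + (1 - l) * f' t)" using fi fi' by auto
      have "(\<integral>\<^sup>+t. ennreal (- g t) \<partial>lborel) \<le> (\<integral>\<^sup>+t. ennreal (- (l * f t + (1 - l) * f' t)) \<partial>lborel)"
        by (intro nn_integral_mono ennreal_leI) (use fg in \<open>smt (verit)\<close>)
      moreover have "(\<integral>\<^sup>+t. ennreal (- (l * f t + (1 - l) * f' t)) \<partial>lborel) \<noteq> \<infinity>"
        using integrableD[OF hi] by auto
      ultimately have ng: "(\<integral>\<^sup>+t. ennreal (- g t) \<partial>lborel) \<noteq> \<infinity>"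
        by (simp add: top_unique[symmetric] less_top[symmetric])
      have gi: "integrable lborel g" using gm pg ng unfolding real_integrable_def by auto
      have "l * integral\<^sup>L lborel f + (1 - l) * integral\<^sup>L lborel f' = integral\<^sup>L lborel (\<lambda>t. l * f t + (1 - l) * f' t)"
        using fi fi' by simp
      also have "\<dots> \<le> integral\<^sup>L lborel g" using hi gi fg by (rule integral_mono)
      finally show ?thesis
        unfolding OBJ_integrable[OF fi] OBJ_integrable[OF fi'] OBJ_integrable[OF gi] by simp
    qed
  qed
qed

lemma exp_int:
  fixes \<rho> :: real
  assumes rho: "\<rho> > 0"
  shows "integrable lborel (\<lambda>t. indicator {0..} t * exp (-\<rho> * t))"
proof -
  have "(\<lambda>x. exp (-\<rho> * x)) absolutely_integrable_on {0..}"
  proof (rule nonnegative_absolutely_integrable_1)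
    show "(\<lambda>x. exp (-\<rho> * x)) integrable_on {0..}" by (rule integrable_on_exp_minus_to_infinity[OF rho])
  qed auto
  then have i: "integrable lebesgue (\<lambda>t. indicator {0..} t *\<^sub>R exp (-\<rho> * t))"
    unfolding set_integrable_def .
  have m: "(\<lambda>t. indicator {0..} t *\<^sub>R exp (-\<rho> * t)) \<in> borel_measurable lborel"
    using borel_measurable_continuous_on_indicator[of "{0..}" "\<lambda>t. exp (-\<rho> * t)"]
    by (auto intro: continuous_intros)
  have "integrable lborel (\<lambda>t. indicator {0..} t *\<^sub>R exp (-\<rho> * t))"
    using i integrable_completion[OF m] by simp
  then show ?thesis by simp
qed

lemma U1_facts:
  fixes U1 :: "real \<Rightarrow> real"
  assumes U1_cont: "continuous_on {0..} U1"
    and U1_C2: "\<exists>U1' U1''. (\<forall>x>0. (U1 has_real_derivative U1' x) (at x)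
                  \<and> (U1' has_real_derivative U1'' x) (at x) \<and> U1' x > 0 \<and> U1'' x < 0)
               \<and> continuous_on {0<..} U1'' \<and> filterlim U1' at_top (at_right 0)"
  shows U1_mono: "\<And>u v. 0 \<le> u \<Longrightarrow> u \<le> v \<Longrightarrow> U1 u \<le> U1 v"
    and U1_conc: "\<And>u v l. 0 \<le> u \<Longrightarrow> 0 \<le> v \<Longrightarrow> 0 \<le> l \<Longrightarrow> l \<le> 1 \<Longrightarrow>
          l * U1 u + (1 - l) * U1 v \<le> U1 (l * u + (1 - l) * v)"
proof -
  obtain U1' U1'' where d: "\<forall>x>0. (U1 has_real_derivative U1' x) (at x)
                  \<and> (U1' has_real_derivative U1'' x) (at x) \<and> U1' x > 0 \<and> U1'' x < 0"
    using U1_C2 by blast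
  show mono: "U1 u \<le> U1 v" if "0 \<le> u" "u \<le> v" for u v
  proof (rule DERIV_nonneg_imp_increasing_open[OF that(2)])
    fix x assume "u < x" "x < v"
    then have "x > 0" using that by simp
    then show "\<exists>y. (U1 has_real_derivative y) (at x) \<and> 0 \<le> y" using d by (auto intro: less_imp_le)
  next
    show "continuous_on {u..v} U1" by (rule continuous_on_subset[OF U1_cont]) (use that in auto)
  qed
  have cp: "concave_on {0<..} U1"
    by (rule f''_le0_imp_concave[where f'=U1' and f''=U1'']) (use d in \<open>auto intro: less_imp_le\<close>)
  show "l * U1 u + (1 - l) * U1 v \<le> U1 (l * u + (1 - l) * v)"
    if u: "0 \<le> u" and v: "0 \<le> v" and l: "0 \<le> l" "l \<le> 1" for u v l
  proof -
    define p where "p = l * u + (1 - l) * v"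
    have p0: "p \<ge> 0" unfolding p_def using u v l by simp
    define X where "X = (\<lambda>n::nat. p + 1 / real n)"
    have Xs: "\<forall>n. X n \<in> {0..}" unfolding X_def using p0 by simp
    have Xl: "X \<longlonglongrightarrow> p" unfolding X_def using tendsto_add[OF tendsto_const lim_inverse_n', of p] by simp
    have lim: "(U1 \<circ> X) \<longlonglongrightarrow> U1 p"
      using U1_cont[unfolded continuous_on_sequentially] Xs Xl p0 by auto
    have bnd: "l * U1 u + (1 - l) * U1 v \<le> (U1 \<circ> X) n" if n: "n \<ge> 1" for n
    proof -
      define e where "e = 1 / real n"
      have e: "e > 0" unfolding e_def using n by simp
      have "l * U1 u + (1 - l) * U1 v \<le> l * U1 (u + e) + (1 - l) * U1 (v + e)"
        using mono[of u "u+e"] mono[of v "v+e"] u v e l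
        by (intro add_mono mult_left_mono) auto
      also have "\<dots> \<le> U1 ((1 - (1 - l)) *\<^sub>R (u + e) + (1 - l) *\<^sub>R (v + e))"
        using concave_onD[OF cp, of "1 - l" "u + e" "v + e"] u v e l by simp
      also have "(1 - (1 - l)) *\<^sub>R (u + e) + (1 - l) *\<^sub>R (v + e) = X n"
        unfolding X_def p_def e_def by (simp add: algebra_simps add_divide_distrib[symmetric])
      finally show ?thesis by simp
    qed
    have "l * U1 u + (1 - l) * U1 v \<le> U1 p"
      by (rule LIMSEQ_le_const[OF lim]) (use bnd in blast)
    then show ?thesis unfolding p_def .
  qed
qed

lemma comb_H:
  assumes "\<eta> \<in> H_plus T" "\<eta>' \<in> H_plus T" "0 \<le> l" "l \<le> 1"
  shows "comb l \<eta> \<eta>' \<in> H_plus T"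
proof -
  have f: "fst \<eta> > 0" "fst \<eta>' > 0" and L: "L2_on T (snd \<eta>)" "L2_on T (snd \<eta>')"
    using assms by (auto simp: H_plus_def)
  have "l * fst \<eta> + (1 - l) * fst \<eta>' > 0"
  proof (cases "l = 0")
    case True then show ?thesis using f by simp
  next
    case False
    then have "l * fst \<eta> > 0" using f assms by simp
    moreover have "(1 - l) * fst \<eta>' \<ge> 0" using f assms by simp
    ultimately show ?thesis by simp
  qed
  moreover have "L2_on T (\<lambda>s. l * snd \<eta> s + (1 - l) * snd \<eta>' s)"
  proof -
    let ?g = "snd \<eta>" and ?h = "snd \<eta>'"
    let ?w = "\<lambda>s. l * ?g s + (1 - l) * ?h s"
    have mg: "(\<lambda>s. indicator {-T..0} s *\<^sub>R ?g s) \<in> borel_measurable lborel"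
      and mh: "(\<lambda>s. indicator {-T..0} s *\<^sub>R ?h s) \<in> borel_measurable lborel"
      and ig: "set_integrable lborel {-T..0} (\<lambda>s. (?g s)\<^sup>2)"
      and ih: "set_integrable lborel {-T..0} (\<lambda>s. (?h s)\<^sup>2)"
      using L by (auto simp: L2_on_def set_borel_measurable_def)
    have mw0: "(\<lambda>s. l * (indicator {-T..0} s *\<^sub>R ?g s) + (1 - l) * (indicator {-T..0} s *\<^sub>R ?h s)) \<in> borel_measurable lborel"
      using mg mh by (intro borel_measurable_add borel_measurable_times) auto
    have eqw: "(\<lambda>s. l * (indicator {-T..0} s *\<^sub>R ?g s) + (1 - l) * (indicator {-T..0} s *\<^sub>R ?h s))
        = (\<lambda>s. indicator {-T..0} s *\<^sub>R ?w s)"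
      by (auto simp: fun_eq_iff split: split_indicator)
    have mw: "(\<lambda>s. indicator {-T..0} s *\<^sub>R ?w s) \<in> borel_measurable lborel"
      using mw0 eqw by simp
    have mw2: "(\<lambda>s. (indicator {-T..0} s *\<^sub>R ?w s) * (indicator {-T..0} s *\<^sub>R ?w s)) \<in> borel_measurable lborel"
      using mw mw by (rule borel_measurable_times)
    have "(\<lambda>s. (indicator {-T..0} s *\<^sub>R ?w s) * (indicator {-T..0} s *\<^sub>R ?w s)) = (\<lambda>s. indicator {-T..0} s *\<^sub>R (?w s)\<^sup>2)"
      by (auto simp: fun_eq_iff power2_eq_square split: split_indicator)
    then have msq: "set_borel_measurable lborel {-T..0} (\<lambda>s. (?w s)\<^sup>2)"
      using mw2 unfolding set_borel_measurable_def by simp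
    have igh: "set_integrable lborel {-T..0} (\<lambda>s. (?g s)\<^sup>2 + (?h s)\<^sup>2)" using ig ih by (rule set_integral_add)
    have "set_integrable lborel {-T..0} (\<lambda>s. (?w s)\<^sup>2)"
    proof (rule set_integrable_bound[OF igh msq], intro AE_I2 impI)
      fix s :: real
      have id: "(?w s)\<^sup>2 = l * (?g s)\<^sup>2 + (1 - l) * (?h s)\<^sup>2 - l * (1 - l) * (?g s - ?h s)\<^sup>2"
        by (simp add: power2_eq_square algebra_simps)
      have "l * (1 - l) * (?g s - ?h s)\<^sup>2 \<ge> 0" using assms by simp
      moreover have "l * (?g s)\<^sup>2 \<le> (?g s)\<^sup>2" using assms by (simp add: mult_left_le_one_le)
      moreover have "(1 - l) * (?h s)\<^sup>2 \<le> (?h s)\<^sup>2" using assms by (simp add: mult_left_le_one_le)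
      ultimately have "(?w s)\<^sup>2 \<le> (?g s)\<^sup>2 + (?h s)\<^sup>2" unfolding id by linarith
      then show "norm ((?w s)\<^sup>2) \<le> norm ((?g s)\<^sup>2 + (?h s)\<^sup>2)" by simp
    qed
    then show ?thesis unfolding L2_on_def using mw unfolding set_borel_measurable_def by simp
  qed
  ultimately show ?thesis by (simp add: H_plus_def comb_def)
qed

locale setting =
  fixes T r \<rho> Cf B M :: real and a :: "real \<Rightarrow> real" and f0 :: "real \<Rightarrow> real \<Rightarrow> real"
    and U1 U2 :: "real \<Rightarrow> real"
  assumes T: "T > 0" and r: "r > 0" and rho: "\<rho> > 0" and B: "B \<ge> 0"
    and am: "set_borel_measurable lborel {-T..0} a" and ab: "\<forall>\<xi>\<in>{-T..0}. \<bar>a \<xi>\<bar> \<le> B"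
    and g: "\<And>u v u' v'. \<bar>f0 u v - f0 u' v'\<bar> \<le> Cf * (\<bar>u - u'\<bar> + \<bar>v - v'\<bar>)" and C: "Cf \<ge> 0"
    and f0c: "concave_on ({0..} \<times> UNIV) (\<lambda>p. f0 (fst p) (snd p))"
    and U1m: "\<And>u v. 0 \<le> u \<Longrightarrow> u \<le> v \<Longrightarrow> U1 u \<le> U1 v"
    and U1c: "\<And>u v l. 0 \<le> u \<Longrightarrow> 0 \<le> v \<Longrightarrow> 0 \<le> l \<Longrightarrow> l \<le> 1 \<Longrightarrow>
          l * U1 u + (1 - l) * U1 v \<le> U1 (l * u + (1 - l) * v)"
    and U1cont: "continuous_on {0..} U1"
    and U2cont: "continuous_on {0<..} U2"
    and U2c: "concave_on {0<..} U2"
    and Mb: "\<And>u v. 0 \<le> u \<Longrightarrow> 0 < v \<Longrightarrow> U1 u + U2 v \<le> M" and M: "M \<ge> 0"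
begin

lemma state_eq:
  assumes "is_state T r a f0 \<eta> c x" "L2_on T (snd \<eta>)"
  shows "state T r a f0 \<eta> c = x"
  unfolding state_def
proof (rule the_equality)
  show "is_state T r a f0 \<eta> c x" by fact
  fix y assume "is_state T r a f0 \<eta> c y"
  then show "y = x" using uniq[OF T less_imp_le[OF r] B am ab assms(2) g C] assms(1) by blast
qed

definition E where "E = (\<lambda>t. M * (indicator {0..} t * exp (-\<rho> * t)))"

lemma E_int: "integrable lborel E"
  unfolding E_def using exp_int[OF rho] by simp

definition hh where "hh c x = (\<lambda>t. indicator {0..} t * (exp (-\<rho> * t) * (U1 (c t) + U2 (x t))))"

lemma hh_bound:
  assumes "\<forall>t\<ge>0. c t \<ge> 0" "\<forall>t\<ge>0. x t > 0"
  shows "hh c x t \<le> E t"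
proof (cases "t \<ge> 0")
  case True
  then have "exp (-\<rho> * t) * (U1 (c t) + U2 (x t)) \<le> exp (-\<rho> * t) * M"
    using Mb assms by (intro mult_left_mono) auto
  then show ?thesis using True unfolding hh_def E_def by (simp add: mult.commute)
next
  case False then show ?thesis unfolding hh_def E_def by simp
qed

lemma hh_meas:
  assumes cI: "\<forall>t\<ge>0. set_integrable lborel {0..t} c" and c0: "\<forall>t\<ge>0. c t \<ge> 0"
    and xc: "continuous_on {0..} x" and xp: "\<forall>t\<ge>0. x t > 0"
  shows "hh c x \<in> borel_measurable lborel"
proof -
  have Cm: "(\<lambda>t. indicator {0..} t * c t) \<in> borel_measurable borel" using control_meas[OF cI] .
  have U1mc: "continuous_on UNIV (\<lambda>z. U1 (max 0 z))"
    by (rule continuous_on_compose2[OF U1cont]) (auto intro: continuous_intros)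
  have G1: "(\<lambda>t. U1 (max 0 (indicator {0..} t * c t))) \<in> borel_measurable borel"
    using measurable_compose[OF Cm borel_measurable_continuous_onI[OF U1mc]] by (simp add: o_def)
  have U2xc: "continuous_on {0..} (\<lambda>t. U2 (x t))"
    by (rule continuous_on_compose2[OF U2cont xc]) (use xp in auto)
  have G2: "(\<lambda>t. indicator {0..} t *\<^sub>R U2 (x t)) \<in> borel_measurable borel"
    by (rule borel_measurable_continuous_on_indicator[OF _ U2xc]) auto
  have ex: "(\<lambda>t. indicator {0..} t *\<^sub>R exp (-\<rho> * t)) \<in> borel_measurable borel"
    by (rule borel_measurable_continuous_on_indicator[of "{0..}" "\<lambda>t. exp (-\<rho> * t)"]) (auto intro!: continuous_intros)
  have m: "(\<lambda>t. (indicator {0..} t *\<^sub>R exp (-\<rho> * t)) * (U1 (max 0 (indicator {0..} t * c t)) + indicator {0..} t *\<^sub>R U2 (x t))) \<in> borel_measurable borel"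
    using ex G1 G2 by (intro borel_measurable_times borel_measurable_add) auto
  have "hh c x = (\<lambda>t. (indicator {0..} t *\<^sub>R exp (-\<rho> * t)) * (U1 (max 0 (indicator {0..} t * c t)) + indicator {0..} t *\<^sub>R U2 (x t)))"
    unfolding hh_def using c0 by (auto simp: fun_eq_iff split: split_indicator)
  then show ?thesis using m by simp
qed


lemma J_OBJ: "J T r \<rho> a f0 U1 U2 \<eta> c = OBJ (hh c (state T r a f0 \<eta> c))"
  by (simp add: J_def objective_OBJ hh_def)

lemma key:
  assumes H: "\<eta> \<in> H_plus T" "\<eta>' \<in> H_plus T" and l: "0 < l" "l < 1"
    and c: "c \<in> admissible T r a f0 \<eta>" and c': "c' \<in> admissible T r a f0 \<eta>'"
  shows "\<exists>cl \<in> admissible T r a f0 (comb l \<eta> \<eta>').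
     ereal l * J T r \<rho> a f0 U1 U2 \<eta> c + ereal (1 - l) * J T r \<rho> a f0 U1 U2 \<eta>' c'
       \<le> J T r \<rho> a f0 U1 U2 (comb l \<eta> \<eta>') cl"
proof -
  define x where "x = state T r a f0 \<eta> c"
  define x' where "x' = state T r a f0 \<eta>' c'"
  have L: "L2_on T (snd \<eta>)" "L2_on T (snd \<eta>')" using H by (auto simp: H_plus_def)
  from c have cc: "control c" and sx: "is_state T r a f0 \<eta> c x" and xp: "\<forall>t\<ge>0. x t > 0"
    unfolding admissible_def x_def by auto
  from c' have cc': "control c'" and sx': "is_state T r a f0 \<eta>' c' x'" and xp': "\<forall>t\<ge>0. x' t > 0"
    unfolding admissible_def x'_def by auto
  have x0: "\<forall>t<0. x t = snd \<eta> t" and xc: "continuous_on {0..} x"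
    and xI: "\<And>t. t \<ge> 0 \<Longrightarrow> set_integrable lborel {0..t} (\<lambda>s. r * x s + f0 (x s) (Dop T a x s) - c s)"
    and xE: "\<And>t. t \<ge> 0 \<Longrightarrow> x t = fst \<eta> + (LINT s:{0..t}|lborel. r * x s + f0 (x s) (Dop T a x s) - c s)"
    using sx[unfolded is_state_D] by auto
  have x0': "\<forall>t<0. x' t = snd \<eta>' t" and xc': "continuous_on {0..} x'"
    and xI': "\<And>t. t \<ge> 0 \<Longrightarrow> set_integrable lborel {0..t} (\<lambda>s. r * x' s + f0 (x' s) (Dop T a x' s) - c' s)"
    and xE': "\<And>t. t \<ge> 0 \<Longrightarrow> x' t = fst \<eta>' + (LINT s:{0..t}|lborel. r * x' s + f0 (x' s) (Dop T a x' s) - c' s)"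
    using sx'[unfolded is_state_D] by auto
  have c0: "\<forall>t\<ge>0. c t \<ge> 0" and cI: "\<forall>t\<ge>0. set_integrable lborel {0..t} c"
    using cc by (auto simp: control_def)
  have c0': "\<forall>t\<ge>0. c' t \<ge> 0" and cI': "\<forall>t\<ge>0. set_integrable lborel {0..t} c'"
    using cc' by (auto simp: control_def)
  define \<eta>l where "\<eta>l = comb l \<eta> \<eta>'"
  have Hl: "\<eta>l \<in> H_plus T" unfolding \<eta>l_def using comb_H H l by simp
  have Ll: "L2_on T (snd \<eta>l)" using Hl by (simp add: H_plus_def)
  have sndl: "snd \<eta>l = (\<lambda>s. l * snd \<eta> s + (1 - l) * snd \<eta>' s)"
    and fstl: "fst \<eta>l = l * fst \<eta> + (1 - l) * fst \<eta>'" by (simp_all add: \<eta>l_def comb_def)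
  define xl where "xl = (\<lambda>t. l * x t + (1 - l) * x' t)"
  define Fx where "Fx = (\<lambda>s. r * x s + f0 (x s) (Dop T a x s) - c s)"
  define Fx' where "Fx' = (\<lambda>s. r * x' s + f0 (x' s) (Dop T a x' s) - c' s)"
  define cl where "cl = (\<lambda>s. r * xl s + f0 (xl s) (Dop T a xl s) - l * Fx s - (1 - l) * Fx' s)"
  have xl0: "\<forall>t<0. xl t = snd \<eta>l t" using x0 x0' by (simp add: xl_def sndl)
  have xlc: "continuous_on {0..} xl" unfolding xl_def by (intro continuous_intros xc xc')
  have xlp: "\<forall>t\<ge>0. xl t > 0"
  proof (intro allI impI)
    fix t :: real assume "t \<ge> 0"
    then have "l * x t > 0" "(1 - l) * x' t > 0" using xp xp' l by auto
    then show "xl t > 0" unfolding xl_def by simp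
  qed
  have integ_eq: "(\<lambda>s. r * xl s + f0 (xl s) (Dop T a xl s) - cl s) = (\<lambda>s. l * Fx s + (1 - l) * Fx' s)"
    unfolding cl_def by (simp add: fun_eq_iff)
  have FI: "set_integrable lborel {0..t} Fx" if "t \<ge> 0" for t using xI[OF that] unfolding Fx_def .
  have FI': "set_integrable lborel {0..t} Fx'" if "t \<ge> 0" for t using xI'[OF that] unfolding Fx'_def .
  have A: "\<forall>t\<ge>0. set_integrable lborel {0..t} (\<lambda>s. l * Fx s + (1 - l) * Fx' s)"
    using FI FI' by (auto intro!: set_integral_add(1) set_integrable_mult_right)
  have Beq: "\<forall>t\<ge>0. xl t = fst \<eta>l + (LINT s:{0..t}|lborel. l * Fx s + (1 - l) * Fx' s)"
  proof (intro allI impI)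
    fix t :: real assume t: "t \<ge> 0"
    have i1: "set_integrable lborel {0..t} (\<lambda>s. l * Fx s)" using FI[OF t] by (rule set_integrable_mult_right)
    have i2: "set_integrable lborel {0..t} (\<lambda>s. (1 - l) * Fx' s)" using FI'[OF t] by (rule set_integrable_mult_right)
    have "(LINT s:{0..t}|lborel. l * Fx s + (1 - l) * Fx' s) = l * (LINT s:{0..t}|lborel. Fx s) + (1 - l) * (LINT s:{0..t}|lborel. Fx' s)"
      using set_integral_add(2)[OF i1 i2] by simp
    then show "xl t = fst \<eta>l + (LINT s:{0..t}|lborel. l * Fx s + (1 - l) * Fx' s)"
      using xE[OF t] xE'[OF t] unfolding xl_def fstl Fx_def Fx'_def by (simp add: algebra_simps)
  qed
  have sl: "is_state T r a f0 \<eta>l cl xl"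
    unfolding is_state_D integ_eq using xl0 xlc A Beq by blast
  have stl: "state T r a f0 \<eta>l cl = xl" by (rule state_eq[OF sl Ll])
  have Dlin: "Dop T a xl s = l * Dop T a x s + (1 - l) * Dop T a x' s" if s: "s \<ge> 0" for s
  proof -
    have ix: "set_integrable lborel {-T..0} (\<lambda>\<xi>. a \<xi> * x (s+\<xi>))"
      using Dint(1)[OF x0 xc L(1) T am ab B, of s s] s by simp
    have ix': "set_integrable lborel {-T..0} (\<lambda>\<xi>. a \<xi> * x' (s+\<xi>))"
      using Dint(1)[OF x0' xc' L(2) T am ab B, of s s] s by simp
    have "Dop T a xl s = (LINT \<xi>:{-T..0}|lborel. l * (a \<xi> * x (s+\<xi>)) + (1 - l) * (a \<xi> * x' (s+\<xi>)))"
      unfolding Dop_def xl_def by (simp add: algebra_simps)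
    also have "\<dots> = l * Dop T a x s + (1 - l) * Dop T a x' s"
      using set_integral_add(2)[OF set_integrable_mult_right[OF ix] set_integrable_mult_right[OF ix']]
      unfolding Dop_def by simp
    finally show ?thesis .
  qed
  have clform: "cl s = l * c s + (1 - l) * c' s + (f0 (xl s) (Dop T a xl s) - l * f0 (x s) (Dop T a x s) - (1 - l) * f0 (x' s) (Dop T a x' s))" for s
    unfolding cl_def Fx_def Fx'_def xl_def by (simp add: algebra_simps)
  have clge: "cl s \<ge> l * c s + (1 - l) * c' s" if s: "s \<ge> 0" for s
  proof -
    have "(1 - (1 - l)) * f0 (x s) (Dop T a x s) + (1 - l) * f0 (x' s) (Dop T a x' s)
        \<le> f0 (fst ((1 - (1 - l)) *\<^sub>R (x s, Dop T a x s) + (1 - l) *\<^sub>R (x' s, Dop T a x' s)))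
             (snd ((1 - (1 - l)) *\<^sub>R (x s, Dop T a x s) + (1 - l) *\<^sub>R (x' s, Dop T a x' s)))"
      using concave_onD[OF f0c, of "1 - l" "(x s, Dop T a x s)" "(x' s, Dop T a x' s)"] xp xp' l s
      by (simp add: less_imp_le)
    then have "l * f0 (x s) (Dop T a x s) + (1 - l) * f0 (x' s) (Dop T a x' s) \<le> f0 (xl s) (Dop T a xl s)"
      using Dlin[OF s] by (simp add: xl_def)
    then show ?thesis unfolding clform by linarith
  qed
  have cl0: "\<forall>t\<ge>0. cl t \<ge> 0"
  proof (intro allI impI)
    fix t :: real assume t: "t \<ge> 0"
    have "l * c t + (1 - l) * c' t \<ge> 0" using c0 c0' t l by simp
    then show "cl t \<ge> 0" using clge[OF t] by linarith
  qed
  have clI: "\<forall>t\<ge>0. set_integrable lborel {0..t} cl"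
  proof (intro allI impI)
    fix t :: real assume t: "t \<ge> 0"
    obtain DX where DXm: "DX \<in> borel_measurable borel" and DXe: "\<forall>s\<ge>0. Dop T a xl s = DX s"
      using Dmeas[OF xl0 xlc Ll T am] by blast
    define \<Phi> where "\<Phi> = (\<lambda>s. f0 (xl s) (Dop T a xl s))"
    have xlt: "continuous_on {0..t} xl" by (rule continuous_on_subset[OF xlc]) auto
    have XLm: "(\<lambda>s. indicator {0..t} s *\<^sub>R xl s) \<in> borel_measurable borel"
      by (rule borel_measurable_continuous_on_indicator[OF _ xlt]) auto
    have "(\<lambda>s. f0 (indicator {0..t} s *\<^sub>R xl s) (DX s)) \<in> borel_measurable borel"
      by (rule f0_meas[OF f0_cont[OF g C] XLm DXm])
    then have "(\<lambda>s. indicator {0..t} s *\<^sub>R f0 (indicator {0..t} s *\<^sub>R xl s) (DX s)) \<in> borel_measurable borel"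
      by (intro borel_measurable_scaleR) auto
    moreover have "(\<lambda>s. indicator {0..t} s *\<^sub>R f0 (indicator {0..t} s *\<^sub>R xl s) (DX s)) = (\<lambda>s. indicator {0..t} s *\<^sub>R \<Phi> s)"
      using DXe unfolding \<Phi>_def by (auto simp: fun_eq_iff split: split_indicator)
    ultimately have \<Phi>m: "set_borel_measurable lborel {0..t} \<Phi>" unfolding set_borel_measurable_def by simp
    have xla: "continuous_on {0..t} (\<lambda>s. \<bar>xl s\<bar>)" by (intro continuous_intros xlt)
    obtain sm where sm: "sm \<in> {0..t}" "\<forall>s\<in>{0..t}. \<bar>xl s\<bar> \<le> \<bar>xl sm\<bar>"
      using continuous_attains_sup[OF compact_Icc _ xla] t by auto
    define KD where "KD = B * (LINT u:{-T..t}|lborel. \<bar>xl u\<bar>)"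
    have Db: "\<bar>Dop T a xl s\<bar> \<le> KD" if "s \<in> {0..t}" for s
      using Dint(2)[OF xl0 xlc Ll T am ab B, of s t] that unfolding KD_def by simp
    define K0 where "K0 = \<bar>f0 0 0\<bar> + Cf * (\<bar>xl sm\<bar> + KD)"
    have \<Phi>b: "\<bar>\<Phi> s\<bar> \<le> K0" if "s \<in> {0..t}" for s
    proof -
      have "\<bar>\<Phi> s - f0 0 0\<bar> \<le> Cf * (\<bar>xl s - 0\<bar> + \<bar>Dop T a xl s - 0\<bar>)" unfolding \<Phi>_def by (rule g)
      also have "\<dots> \<le> Cf * (\<bar>xl sm\<bar> + KD)" using sm Db[OF that] that C by (intro mult_left_mono add_mono) auto
      finally show ?thesis unfolding K0_def by linarith
    qed
    have Ki: "set_integrable lborel {0..t} (\<lambda>s. K0)"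
      by (rule borel_integrable_atLeastAtMost') (auto intro: continuous_intros)
    have \<Phi>i: "set_integrable lborel {0..t} \<Phi>"
      by (rule set_integrable_bound[OF Ki \<Phi>m]) (use \<Phi>b in \<open>auto intro!: AE_I2 simp: order_trans[OF _ abs_ge_self]\<close>)
    have xli: "set_integrable lborel {0..t} xl" by (rule borel_integrable_atLeastAtMost'[OF xlt])
    have "set_integrable lborel {0..t} (\<lambda>s. r * xl s + \<Phi> s - l * Fx s - (1 - l) * Fx' s)"
      using xli \<Phi>i FI[OF t] FI'[OF t]
      by (intro set_integral_diff(1) set_integral_add(1) set_integrable_mult_right) auto
    then show "set_integrable lborel {0..t} cl" unfolding cl_def \<Phi>_def .
  qed
  have ctl: "control cl" unfolding control_def using cl0 clI by auto
  have cladm: "cl \<in> admissible T r a f0 \<eta>l" unfolding admissible_def using ctl sl stl xlp by auto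
  have pw: "l * hh c x t + (1 - l) * hh c' x' t \<le> hh cl xl t" for t
  proof (cases "t \<ge> 0")
    case False then show ?thesis unfolding hh_def by simp
  next
    case True
    have nn: "0 \<le> l * c t + (1 - l) * c' t" using c0 c0' True l by simp
    have u1: "l * U1 (c t) + (1 - l) * U1 (c' t) \<le> U1 (cl t)"
      using U1c[of "c t" "c' t" l] U1m[OF nn clge[OF True]] c0 c0' True l by simp
    have "(1 - (1 - l)) * U2 (x t) + (1 - l) * U2 (x' t) \<le> U2 ((1 - (1 - l)) *\<^sub>R x t + (1 - l) *\<^sub>R x' t)"
      using concave_onD[OF U2c, of "1 - l" "x t" "x' t"] xp xp' True l by simp
    then have u2: "l * U2 (x t) + (1 - l) * U2 (x' t) \<le> U2 (xl t)" unfolding xl_def by simp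
    have "l * (U1 (c t) + U2 (x t)) + (1 - l) * (U1 (c' t) + U2 (x' t)) \<le> U1 (cl t) + U2 (xl t)"
      using u1 u2 by (simp add: algebra_simps)
    then have "exp (-\<rho> * t) * (l * (U1 (c t) + U2 (x t)) + (1 - l) * (U1 (c' t) + U2 (x' t)))
        \<le> exp (-\<rho> * t) * (U1 (cl t) + U2 (xl t))" by (intro mult_left_mono) auto
    then show ?thesis unfolding hh_def using True by (simp add: algebra_simps)
  qed
  have "ereal l * OBJ (hh c x) + ereal (1 - l) * OBJ (hh c' x') \<le> OBJ (hh cl xl)"
  proof (rule OBJ_concave[OF _ _ _ E_int _ _ _ l pw])
    show "hh c x \<in> borel_measurable lborel" by (rule hh_meas[OF cI c0 xc xp])
    show "hh c' x' \<in> borel_measurable lborel" by (rule hh_meas[OF cI' c0' xc' xp'])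
    show "hh cl xl \<in> borel_measurable lborel" by (rule hh_meas[OF clI cl0 xlc xlp])
    show "\<And>t. hh c x t \<le> E t" by (rule hh_bound[OF c0 xp])
    show "\<And>t. hh c' x' t \<le> E t" by (rule hh_bound[OF c0' xp'])
    show "\<And>t. hh cl xl t \<le> E t" by (rule hh_bound[OF cl0 xlp])
  qed
  then have "ereal l * J T r \<rho> a f0 U1 U2 \<eta> c + ereal (1 - l) * J T r \<rho> a f0 U1 U2 \<eta>' c'
       \<le> J T r \<rho> a f0 U1 U2 \<eta>l cl"
    unfolding J_OBJ x_def[symmetric] x'_def[symmetric] stl .
  then show ?thesis using cladm unfolding \<eta>l_def by blast
qed

end

context setting begin

lemma J_le:
  assumes "c \<in> admissible T r a f0 \<eta>"
  shows "J T r \<rho> a f0 U1 U2 \<eta> c \<le> ereal (integral\<^sup>L lborel E)"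
proof -
  define x where "x = state T r a f0 \<eta> c"
  have c0: "\<forall>t\<ge>0. c t \<ge> 0" and xp: "\<forall>t\<ge>0. x t > 0"
    using assms unfolding admissible_def control_def x_def by auto
  have "J T r \<rho> a f0 U1 U2 \<eta> c = OBJ (hh c x)" unfolding J_OBJ x_def ..
  also have "\<dots> \<le> enn2ereal (\<integral>\<^sup>+t. ennreal (hh c x t) \<partial>lborel)"
    unfolding OBJ_def by (rule ereal_diff_le_self) (rule enn2ereal_nonneg)
  also have "\<dots> \<le> enn2ereal (\<integral>\<^sup>+t. ennreal (E t) \<partial>lborel)"
    unfolding less_eq_ennreal.rep_eq[symmetric]
    by (intro nn_integral_mono ennreal_leI hh_bound[OF c0 xp])
  also have "(\<integral>\<^sup>+t. ennreal (E t) \<partial>lborel) = ennreal (integral\<^sup>L lborel E)"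
    by (rule nn_integral_eq_integral[OF E_int]) (use M in \<open>auto simp: E_def\<close>)
  also have "enn2ereal (ennreal (integral\<^sup>L lborel E)) = ereal (integral\<^sup>L lborel E)"
    by (rule enn2ereal_ennreal) (use M in \<open>auto simp: E_def intro!: integral_nonneg\<close>)
  finally show ?thesis .
qed

lemma V_le: "V T r \<rho> a f0 U1 U2 \<eta> \<le> ereal (integral\<^sup>L lborel E)"
  unfolding V_def by (rule Sup_least) (use J_le in blast)

lemma V_fin:
  assumes "\<eta> \<in> domV T r \<rho> a f0 U1 U2"
  obtains v where "V T r \<rho> a f0 U1 U2 \<eta> = ereal v"
proof -
  have "V T r \<rho> a f0 U1 U2 \<eta> > -\<infinity>" using assms by (simp add: domV_def)
  moreover have "V T r \<rho> a f0 U1 U2 \<eta> < \<infinity>" using V_le[of \<eta>] by (cases "V T r \<rho> a f0 U1 U2 \<eta>") auto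
  ultimately show ?thesis using that by (cases "V T r \<rho> a f0 U1 U2 \<eta>") auto
qed

lemma conc:
  assumes d: "\<eta> \<in> domV T r \<rho> a f0 U1 U2" "\<eta>' \<in> domV T r \<rho> a f0 U1 U2" and l: "0 \<le> l" "l \<le> 1"
  shows "ereal l * V T r \<rho> a f0 U1 U2 \<eta> + ereal (1 - l) * V T r \<rho> a f0 U1 U2 \<eta>'
           \<le> V T r \<rho> a f0 U1 U2 (comb l \<eta> \<eta>')"
proof -
  have H: "\<eta> \<in> H_plus T" "\<eta>' \<in> H_plus T" using d by (auto simp: domV_def)
  obtain v1 where v1: "V T r \<rho> a f0 U1 U2 \<eta> = ereal v1" using V_fin[OF d(1)] by blast
  obtain v2 where v2: "V T r \<rho> a f0 U1 U2 \<eta>' = ereal v2" using V_fin[OF d(2)] by blast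
  consider "l = 0" | "l = 1" | "0 < l \<and> l < 1" using l by linarith
  then show ?thesis
  proof cases
    case 1
    have "comb l \<eta> \<eta>' = \<eta>'" unfolding 1 comb_def by (cases \<eta>') auto
    then show ?thesis using 1 v1 v2 by simp
  next
    case 2
    have "comb l \<eta> \<eta>' = \<eta>" unfolding 2 comb_def by (cases \<eta>) auto
    then show ?thesis using 2 v1 v2 by simp
  next
    case 3
    then have l0: "0 < l" and l1: "l < 1" by auto
    show ?thesis
    proof (rule ccontr)
      let ?V3 = "V T r \<rho> a f0 U1 U2 (comb l \<eta> \<eta>')"
      assume "\<not> ?thesis"
      then have lt: "?V3 < ereal (l * v1 + (1 - l) * v2)" unfolding v1 v2 by simp
      obtain w where w: "?V3 < ereal w" "ereal w < ereal (l * v1 + (1 - l) * v2)"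
        using ereal_dense2[OF lt] by blast
      define \<delta> where "\<delta> = l * v1 + (1 - l) * v2 - w"
      have \<delta>: "\<delta> > 0" using w(2) unfolding \<delta>_def by simp
      have "ereal (v1 - \<delta>) < V T r \<rho> a f0 U1 U2 \<eta>" using \<delta> v1 by simp
      then obtain c where c: "c \<in> admissible T r a f0 \<eta>" and jc: "ereal (v1 - \<delta>) < J T r \<rho> a f0 U1 U2 \<eta> c"
        unfolding V_def by (auto simp: less_SUP_iff)
      have "ereal (v2 - \<delta>) < V T r \<rho> a f0 U1 U2 \<eta>'" using \<delta> v2 by simp
      then obtain c' where c': "c' \<in> admissible T r a f0 \<eta>'" and jc': "ereal (v2 - \<delta>) < J T r \<rho> a f0 U1 U2 \<eta>' c'"
        unfolding V_def by (auto simp: less_SUP_iff)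
      obtain cl where cl: "cl \<in> admissible T r a f0 (comb l \<eta> \<eta>')"
        and ineq: "ereal l * J T r \<rho> a f0 U1 U2 \<eta> c + ereal (1 - l) * J T r \<rho> a f0 U1 U2 \<eta>' c'
                \<le> J T r \<rho> a f0 U1 U2 (comb l \<eta> \<eta>') cl"
        using key[OF H l0 l1 c c'] by blast
      have "J T r \<rho> a f0 U1 U2 (comb l \<eta> \<eta>') cl \<le> ?V3"
        unfolding V_def using cl by (rule SUP_upper)
      obtain j where j: "J T r \<rho> a f0 U1 U2 \<eta> c = ereal j"
      proof -
        have "J T r \<rho> a f0 U1 U2 \<eta> c < \<infinity>" using J_le[OF c] by (cases "J T r \<rho> a f0 U1 U2 \<eta> c") auto
        then show ?thesis using jc that by (cases "J T r \<rho> a f0 U1 U2 \<eta> c") auto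
      qed
      obtain j' where j': "J T r \<rho> a f0 U1 U2 \<eta>' c' = ereal j'"
      proof -
        have "J T r \<rho> a f0 U1 U2 \<eta>' c' < \<infinity>" using J_le[OF c'] by (cases "J T r \<rho> a f0 U1 U2 \<eta>' c'") auto
        then show ?thesis using jc' that by (cases "J T r \<rho> a f0 U1 U2 \<eta>' c'") auto
      qed
      have jj: "v1 - \<delta> < j" "v2 - \<delta> < j'" using jc jc' j j' by auto
      have "l * (v1 - \<delta>) < l * j" using jj l0 by simp
      moreover have "(1 - l) * (v2 - \<delta>) < (1 - l) * j'" using jj l1 by simp
      ultimately have "w < l * j + (1 - l) * j'" unfolding \<delta>_def by (simp add: algebra_simps)
      then have "ereal w < ereal l * J T r \<rho> a f0 U1 U2 \<eta> c + ereal (1 - l) * J T r \<rho> a f0 U1 U2 \<eta>' c'"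
        unfolding j j' by simp
      also note ineq
      also note \<open>J T r \<rho> a f0 U1 U2 (comb l \<eta> \<eta>') cl \<le> ?V3\<close>
      finally show False using w(1) by simp
    qed
  qed
qed

lemma dom_conv:
  assumes d: "\<eta> \<in> domV T r \<rho> a f0 U1 U2" "\<eta>' \<in> domV T r \<rho> a f0 U1 U2" and l: "0 \<le> l" "l \<le> 1"
  shows "comb l \<eta> \<eta>' \<in> domV T r \<rho> a f0 U1 U2"
proof -
  have H: "\<eta> \<in> H_plus T" "\<eta>' \<in> H_plus T" using d by (auto simp: domV_def)
  obtain v1 where v1: "V T r \<rho> a f0 U1 U2 \<eta> = ereal v1" using V_fin[OF d(1)] by blast
  obtain v2 where v2: "V T r \<rho> a f0 U1 U2 \<eta>' = ereal v2" using V_fin[OF d(2)] by blast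
  have "-\<infinity> < ereal (l * v1 + (1 - l) * v2)" by simp
  also have "ereal (l * v1 + (1 - l) * v2) = ereal l * V T r \<rho> a f0 U1 U2 \<eta> + ereal (1 - l) * V T r \<rho> a f0 U1 U2 \<eta>'"
    unfolding v1 v2 by simp
  also have "\<dots> \<le> V T r \<rho> a f0 U1 U2 (comb l \<eta> \<eta>')" by (rule conc[OF d l])
  finally show ?thesis using comb_H[OF H l] by (simp add: domV_def)
qed

end

theorem proposition2p4:
  fixes T r \<rho> Cf :: real and a :: "real \<Rightarrow> real" and f0 :: "real \<Rightarrow> real \<Rightarrow> real"
    and U1 U2 :: "real \<Rightarrow> real"
  assumes T: "T > 0" and r: "r > 0" and rho: "\<rho> > 0"
    and a_W12: "W12_on T a" and a_nonneg: "\<forall>\<xi>\<in>{-T..0}. a \<xi> \<ge> 0" and a_start: "a (-T) = 0"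
    and f0_concave: "concave_on ({0..} \<times> UNIV) (\<lambda>p. f0 (fst p) (snd p))"
    and f0_mono: "\<forall>x\<ge>0. \<forall>y y'. y \<le> y' \<longrightarrow> f0 x y \<le> f0 x y'"
    and f0_lip: "Cf-lipschitz_on ({0..} \<times> UNIV) (\<lambda>p. f0 (fst p) (snd p))"
    and f0_pos: "\<forall>y>0. f0 0 y > 0"
    and f0_ext: "\<forall>x<0. \<forall>y. f0 x y = f0 0 y"
    and U1_cont: "continuous_on {0..} U1"
    and U1_C2: "\<exists>U1' U1''. (\<forall>x>0. (U1 has_real_derivative U1' x) (at x)
                  \<and> (U1' has_real_derivative U1'' x) (at x) \<and> U1' x > 0 \<and> U1'' x < 0)
               \<and> continuous_on {0<..} U1'' \<and> filterlim U1' at_top (at_right 0)"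
    and U1_bdd: "bounded (U1 ` {0..})"
    and U2_cont: "continuous_on {0<..} U2"
    and U2_incr: "strict_mono_on {0<..} U2"
    and U2_concave: "concave_on {0<..} U2"
    and U2_bdd: "bdd_above (U2 ` {0<..})"
    and U2_int: "set_integrable lborel {0..} (\<lambda>t. exp (-\<rho> * t) * U2 (exp (-Cf * t)))"
  shows "(\<forall>\<eta>\<in>domV T r \<rho> a f0 U1 U2. \<forall>\<eta>'\<in>domV T r \<rho> a f0 U1 U2. \<forall>l\<in>{0..1}.
            comb l \<eta> \<eta>' \<in> domV T r \<rho> a f0 U1 U2)
       \<and> (\<forall>\<eta>\<in>domV T r \<rho> a f0 U1 U2. \<forall>\<eta>'\<in>domV T r \<rho> a f0 U1 U2. \<forall>l\<in>{0..1}.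
            V T r \<rho> a f0 U1 U2 (comb l \<eta> \<eta>')
              \<ge> ereal l * V T r \<rho> a f0 U1 U2 \<eta> + ereal (1 - l) * V T r \<rho> a f0 U1 U2 \<eta>')"
proof -
  obtain B where B: "B \<ge> 0" and ab: "\<forall>\<xi>\<in>{-T..0}. \<bar>a \<xi>\<bar> \<le> B" using a_props(2)[OF a_W12] by blast
  have am: "set_borel_measurable lborel {-T..0} a" using a_props(1)[OF a_W12] .
  have g: "\<And>u v u' v'. \<bar>f0 u v - f0 u' v'\<bar> \<le> Cf * (\<bar>u - u'\<bar> + \<bar>v - v'\<bar>)"
    by (rule f0_global[OF f0_lip f0_ext])
  have C: "Cf \<ge> 0" by (rule lipschitz_on_nonneg[OF f0_lip])
  obtain b1 where b1: "\<forall>y\<in>U1 ` {0..}. norm y \<le> b1" using U1_bdd unfolding bounded_iff by blast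
  obtain b2 where b2: "\<forall>y\<in>U2 ` {0<..}. y \<le> b2" using U2_bdd unfolding bdd_above_def by blast
  define M where "M = max 0 (b1 + b2)"
  have Mb: "U1 u + U2 v \<le> M" if "0 \<le> u" "0 < v" for u v
  proof -
    have "U1 u \<le> b1" using b1 that by (auto simp: abs_le_iff)
    moreover have "U2 v \<le> b2" using b2 that by auto
    ultimately show ?thesis unfolding M_def by linarith
  qed
  interpret S: setting T r \<rho> Cf B M a f0 U1 U2
  proof
    show "\<And>u v. 0 \<le> u \<Longrightarrow> u \<le> v \<Longrightarrow> U1 u \<le> U1 v" by (rule U1_facts(1)[OF U1_cont U1_C2])
    show "\<And>u v l. 0 \<le> u \<Longrightarrow> 0 \<le> v \<Longrightarrow> 0 \<le> l \<Longrightarrow> l \<le> 1 \<Longrightarrow>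
          l * U1 u + (1 - l) * U1 v \<le> U1 (l * u + (1 - l) * v)" by (rule U1_facts(2)[OF U1_cont U1_C2])
  qed (use T r rho B am ab g C f0_concave U1_cont U2_cont U2_concave Mb in \<open>auto simp: M_def\<close>)
  show ?thesis using S.dom_conv S.conc by auto
qed

end
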